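(* For any $\ell\ge1$ and $a_1,\dots,a_\ell\in\{1,\dots,n\}$, the following equality holds in the reduction algebra $N/I$: $$P(x^{a_1}+I)\,P(x^{a_2}+I)\cdots P(x^{a_\ell}+I)=P(x^{a_1}x^{a_2}\cdots x^{a_\ell}+I).$$
   Context: $W_\eta(2n)$ is the unital associative $\mathbb{C}$-algebra generated by $x^a,\partial_a$ ($a=1,\dots,n$) and central elements $\eta_{ab},\eta^{ab}$ subject to $x^ax^b=x^bx^a$, $\partial_a\partial_b=\partial_b\partial_a$, $\partial_ax^b-x^b\partial_a=\delta_a^b$, $\eta_{ab}=\eta_{ba}$, $\sum_b\eta_{ab}\eta^{bc}=\delta_a^c$. Repeated upper/lower indices are summed; $x_a=\eta_{ab}x^b$, $\partial^a=\eta^{ab}\partial_b$; $E=\frac i2\partial_a\partial^a$, $F=\frac i2x_ax^a$, $H=-\frac12(x^a\partial_a+\partial_ax^a)$. $A$ is the localization of $W_\eta(2n)$ at the nonzero polynomials in $H$, $I=AE$ is the left ideal generated by $E$, $N=\{m\in A: Im\subset I\}$ its normalizer, and $N/I$ is the reduction algebra with product $(m+I)(m'+I)=mm'+I$. The extremal projector acts on $A/I$ by $P(w+I)=\sum_{k\ge0}\frac{(-1)^k}{k!}f_k(H)F^k(\operatorname{ad}E)^k(w)+I$, where $(\operatorname{ad}E)(y)=Ey-yE$, $f_0=1$ and $f_k(H)=\big((H+2)(H+3)\cdots(H+k+1)\big)^{-1}$; it is known that $P(w+I)\in N/I$ for all $w\in A$, that $P$ is the identity on $N/I$, and that $P(Fy+I)=0$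 for all $y\in A$. *)

theory Defs
  imports Complex_Main "HOL-Computational_Algebra.Polynomial"
begin

text \<open>Generators of the localized algebra A: x^a, d_a, eta_ab, eta^ab (indices in 1..n),
  and a formal inverse Inv p of p(H) for every polynomial p (Inv 0 is killed).\<close>
datatype gen = X nat | D nat | Eta nat nat | EtaU nat nat | Inv "complex poly"

datatype expr = Gen gen | Scal complex | Add expr expr | Mul expr expr

fun esum :: "(nat \<Rightarrow> expr) \<Rightarrow> nat list \<Rightarrow> expr" where
  "esum f [] = Scal 0"
| "esum f (a # as) = Add (f a) (esum f as)"

fun eprod :: "expr list \<Rightarrow> expr" where
  "eprod [] = Scal 1"
| "eprod (e # es) = Mul e (eprod es)"

fun epow :: "expr \<Rightarrow> nat \<Rightarrow> expr" where
  "epow e 0 = Scal 1"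
| "epow e (Suc k) = Mul e (epow e k)"

definition idx :: "nat \<Rightarrow> nat list" where
  "idx n = [1..<Suc n]"

definition esub :: "expr \<Rightarrow> expr \<Rightarrow> expr" where
  "esub a b = Add a (Mul (Scal (-1)) b)"

definition Eexpr :: "nat \<Rightarrow> expr" where
  "Eexpr n = Mul (Scal (\<i>/2)) (esum (\<lambda>a. esum (\<lambda>b.
      Mul (Gen (D a)) (Mul (Gen (EtaU a b)) (Gen (D b)))) (idx n)) (idx n))"

definition Fexpr :: "nat \<Rightarrow> expr" where
  "Fexpr n = Mul (Scal (\<i>/2)) (esum (\<lambda>a. esum (\<lambda>b.
      Mul (Mul (Gen (Eta a b)) (Gen (X b))) (Gen (X a))) (idx n)) (idx n))"

definition Hexpr :: "nat \<Rightarrow> expr" where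
  "Hexpr n = Mul (Scal (-1/2)) (esum (\<lambda>a.
      Add (Mul (Gen (X a)) (Gen (D a))) (Mul (Gen (D a)) (Gen (X a)))) (idx n))"

definition evalH :: "nat \<Rightarrow> complex poly \<Rightarrow> expr" where
  "evalH n p = esum (\<lambda>i. Mul (Scal (coeff p i)) (epow (Hexpr n) i)) [0..<Suc (degree p)]"

fun valid_gen :: "nat \<Rightarrow> gen \<Rightarrow> bool" where
  "valid_gen n (X a) = (a \<in> {1..n})"
| "valid_gen n (D a) = (a \<in> {1..n})"
| "valid_gen n (Eta a b) = (a \<in> {1..n} \<and> b \<in> {1..n})"
| "valid_gen n (EtaU a b) = (a \<in> {1..n} \<and> b \<in> {1..n})"
| "valid_gen n (Inv p) = (p \<noteq> 0)"

fun is_wgen :: "gen \<Rightarrow> bool" where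
  "is_wgen (Inv p) = False"
| "is_wgen _ = True"

text \<open>The congruence presenting A = W_eta(2n) localized at nonzero polynomials in H,
  as the unital associative C-algebra freely generated by the generators modulo the
  defining relations of W_eta(2n) and the relations p(H) (p(H))^{-1} = (p(H))^{-1} p(H) = 1.\<close>
inductive weq :: "nat \<Rightarrow> expr \<Rightarrow> expr \<Rightarrow> bool" for n where
  refl: "weq n e e"
| sym: "weq n e f \<Longrightarrow> weq n f e"
| trans: "weq n e f \<Longrightarrow> weq n f g \<Longrightarrow> weq n e g"
| add_cong: "weq n a a' \<Longrightarrow> weq n b b' \<Longrightarrow> weq n (Add a b) (Add a' b')"
| mul_cong: "weq n a a' \<Longrightarrow> weq n b b' \<Longrightarrow> weq n (Mul a b) (Mul a' b')"
| add_assoc: "weq n (Add (Add a b) c) (Add a (Add b c))"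
| add_comm: "weq n (Add a b) (Add b a)"
| add_zero: "weq n (Add a (Scal 0)) a"
| mul_assoc: "weq n (Mul (Mul a b) c) (Mul a (Mul b c))"
| mul_one_l: "weq n (Mul (Scal 1) a) a"
| mul_one_r: "weq n (Mul a (Scal 1)) a"
| mul_zero_l: "weq n (Mul (Scal 0) a) (Scal 0)"
| distl: "weq n (Mul a (Add b c)) (Add (Mul a b) (Mul a c))"
| distr: "weq n (Mul (Add a b) c) (Add (Mul a c) (Mul b c))"
| scal_add: "weq n (Add (Scal c) (Scal d)) (Scal (c + d))"
| scal_mul: "weq n (Mul (Scal c) (Scal d)) (Scal (c * d))"
| scal_comm: "weq n (Mul (Scal c) a) (Mul a (Scal c))"
| kill: "\<not> valid_gen n g \<Longrightarrow> weq n (Gen g) (Scal 0)"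
| xx: "weq n (Mul (Gen (X a)) (Gen (X b))) (Mul (Gen (X b)) (Gen (X a)))"
| dd: "weq n (Mul (Gen (D a)) (Gen (D b))) (Mul (Gen (D b)) (Gen (D a)))"
| dx: "a \<in> {1..n} \<Longrightarrow> b \<in> {1..n} \<Longrightarrow>
       weq n (esub (Mul (Gen (D a)) (Gen (X b))) (Mul (Gen (X b)) (Gen (D a))))
             (Scal (if a = b then 1 else 0))"
| eta_central: "is_wgen g \<Longrightarrow> weq n (Mul (Gen (Eta a b)) (Gen g)) (Mul (Gen g) (Gen (Eta a b)))"
| etaU_central: "is_wgen g \<Longrightarrow> weq n (Mul (Gen (EtaU a b)) (Gen g)) (Mul (Gen g) (Gen (EtaU a b)))"
| eta_sym: "weq n (Gen (Eta a b)) (Gen (Eta b a))"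
| eta_inv: "a \<in> {1..n} \<Longrightarrow> c \<in> {1..n} \<Longrightarrow>
       weq n (esum (\<lambda>b. Mul (Gen (Eta a b)) (Gen (EtaU b c))) (idx n))
             (Scal (if a = c then 1 else 0))"
| inv_l: "p \<noteq> 0 \<Longrightarrow> weq n (Mul (evalH n p) (Gen (Inv p))) (Scal 1)"
| inv_r: "p \<noteq> 0 \<Longrightarrow> weq n (Mul (Gen (Inv p)) (evalH n p)) (Scal 1)"

definition inI :: "nat \<Rightarrow> expr \<Rightarrow> bool" where
  "inI n m \<longleftrightarrow> (\<exists>y. weq n m (Mul y (Eexpr n)))"

definition adE :: "nat \<Rightarrow> expr \<Rightarrow> expr" where
  "adE n y = esub (Mul (Eexpr n) y) (Mul y (Eexpr n))"

text \<open>(H+2)(H+3)...(H+k+1) as a polynomial in H; f_k(H) is its inverse.\<close>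
definition fpoly :: "nat \<Rightarrow> complex poly" where
  "fpoly k = (\<Prod>j\<in>{2..k+1}. [:of_nat j, 1:])"

definition Ptrunc :: "nat \<Rightarrow> nat \<Rightarrow> expr \<Rightarrow> expr" where
  "Ptrunc n K w = esum (\<lambda>k. Mul (Scal ((-1) ^ k / fact k))
       (Mul (Gen (Inv (fpoly k))) (Mul (epow (Fexpr n) k) ((adE n ^^ k) w)))) [0..<Suc K]"

text \<open>P(w+I) = c+I : the series defining P(w+I) converges in A/I to c+I,
  i.e. its partial sums are eventually congruent to c modulo I.\<close>
definition P_of :: "nat \<Rightarrow> expr \<Rightarrow> expr \<Rightarrow> bool" where
  "P_of n w c \<longleftrightarrow> (\<exists>K0. \<forall>K\<ge>K0. inI n (esub (Ptrunc n K w) c))"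

definition xmono :: "nat list \<Rightarrow> expr" where
  "xmono as = eprod (map (\<lambda>a. Gen (X a)) as)"

end

theory Submission
  imports Defs
begin

lemma weq_neg_add: "weq n (Add (Mul (Scal (-1)) a) a) (Scal 0)"
proof -
  have "weq n (Add (Mul (Scal (-1)) a) a) (Add (Mul (Scal (-1)) a) (Mul (Scal 1) a))"
    by (intro weq.add_cong weq.refl weq.sym[OF weq.mul_one_l])
  moreover have "weq n (Add (Mul (Scal (-1)) a) (Mul (Scal 1) a)) (Mul (Add (Scal (-1)) (Scal 1)) a)"
    by (rule weq.sym[OF weq.distr])
  moreover have "weq n (Mul (Add (Scal (-1)) (Scal 1)) a) (Mul (Scal 0) a)"
    using weq.mul_cong[OF weq.scal_add[of n "-1" 1] weq.refl[of n a]] by simp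
  ultimately show ?thesis by (meson weq.trans weq.mul_zero_l)
qed

definition weqall :: "(nat \<Rightarrow> expr) \<Rightarrow> (nat \<Rightarrow> expr) \<Rightarrow> bool" where
  "weqall f g \<longleftrightarrow> (\<forall>m. weq m (f m) (g m))"

lemma equivp_weqall: "equivp weqall"
  unfolding weqall_def
  by (intro equivpI reflpI sympI transpI) (auto intro: weq.refl weq.sym weq.trans)

quotient_type aq = "nat \<Rightarrow> expr" / weqall by (rule equivp_weqall)

instantiation aq :: "{ring, monoid_mult}"
begin
lift_definition zero_aq :: aq is "\<lambda>m. Scal 0" .
lift_definition one_aq :: aq is "\<lambda>m. Scal 1" .
lift_definition plus_aq :: "aq \<Rightarrow> aq \<Rightarrow> aq" is "\<lambda>f g m. Add (f m) (g m)"
  by (auto simp: weqall_def intro: weq.add_cong)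
lift_definition times_aq :: "aq \<Rightarrow> aq \<Rightarrow> aq" is "\<lambda>f g m. Mul (f m) (g m)"
  by (auto simp: weqall_def intro: weq.mul_cong)
lift_definition uminus_aq :: "aq \<Rightarrow> aq" is "\<lambda>f m. Mul (Scal (-1)) (f m)"
  by (auto simp: weqall_def intro: weq.mul_cong weq.refl)
lift_definition minus_aq :: "aq \<Rightarrow> aq \<Rightarrow> aq" is "\<lambda>f g m. esub (f m) (g m)"
  by (auto simp: weqall_def esub_def intro!: weq.mul_cong weq.add_cong weq.refl)
instance
proof
  fix a b c :: aq
  show "a + b + c = a + (b + c)" by transfer (auto simp: weqall_def intro: weq.add_assoc)
  show "a + b = b + a" by transfer (auto simp: weqall_def intro: weq.add_comm)
  show "0 + a = a" by transfer (auto simp: weqall_def intro: weq.add_comm weq.add_zero weq.trans)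
  show "- a + a = 0" by transfer (auto simp: weqall_def intro: weq_neg_add)
  show "a - b = a + - b" by transfer (auto simp: weqall_def esub_def intro: weq.refl)
  show "a * b * c = a * (b * c)" by transfer (auto simp: weqall_def intro: weq.mul_assoc)
  show "(a + b) * c = a * c + b * c" by transfer (auto simp: weqall_def intro: weq.distr)
  show "a * (b + c) = a * b + a * c" by transfer (auto simp: weqall_def intro: weq.distl)
  show "1 * a = a" by transfer (auto simp: weqall_def intro: weq.mul_one_l)
  show "a * 1 = a" by transfer (auto simp: weqall_def intro: weq.mul_one_r)
qed
end


lift_definition sc :: "complex \<Rightarrow> aq" is "\<lambda>c m. Scal c" .
lift_definition cl :: "nat \<Rightarrow> expr \<Rightarrow> aq" is "\<lambda>n e m. if m = n then e else Scal 0" .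

lemma cl_eq_iff: "cl n a = cl n b \<longleftrightarrow> weq n a b"
  apply transfer
  by (auto simp: weqall_def intro: weq.refl)

lemma weq_zero_zero_add: "weq n (Scal 0) (Add (Scal 0) (Scal 0))"
  by (rule weq.sym[OF weq.add_zero])

lemma cl_Add: "cl n (Add a b) = cl n a + cl n b"
  by transfer (auto simp: weqall_def intro: weq.refl weq_zero_zero_add)

lemma cl_Mul: "cl n (Mul a b) = cl n a * cl n b"
  by transfer (auto simp: weqall_def intro: weq.refl weq.sym[OF weq.mul_zero_l])

lemma weq_sc0: "weq m (Scal 0) (Mul (Scal c) (Scal 0))"
  using weq.sym[OF weq.scal_mul[of m c 0]] by simp

definition uu :: "nat \<Rightarrow> aq" where "uu n = cl n (Scal 1)"

lemma cl_Scal: "cl n (Scal c) = sc c * uu n"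
  unfolding uu_def
  by transfer (auto simp: weqall_def intro: weq.refl weq_sc0 weq.sym[OF weq.mul_one_r])

lemma sc_central: "sc c * z = z * sc c"
  by transfer (auto simp: weqall_def intro: weq.scal_comm)

lemma sc_add: "sc (c + d) = sc c + sc d"
  by transfer (auto simp: weqall_def intro: weq.sym[OF weq.scal_add])

lemma sc_mult: "sc (c * d) = sc c * sc d"
  by transfer (auto simp: weqall_def intro: weq.sym[OF weq.scal_mul])

lemma sc_0: "sc 0 = 0"
  by transfer (auto simp: weqall_def intro: weq.refl)

lemma sc_1: "sc 1 = 1"
  by transfer (auto simp: weqall_def intro: weq.refl)

lemma sc_m1: "sc (-1) * z = - z"
  by transfer (auto simp: weqall_def intro: weq.refl)

lemma uu_central: "uu n * z = z * uu n"
  unfolding uu_def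
  by transfer (auto simp: weqall_def intro: weq.refl weq.scal_comm)

lemma uu_cl1: "uu n * cl n e = cl n e"
  unfolding uu_def
  by transfer (auto simp: weqall_def intro: weq.mul_one_l weq.mul_zero_l)

lemma uu_cl2: "cl n e * uu n = cl n e"
  using uu_cl1 uu_central by metis

lemma uu_idem: "uu n * uu n = uu n"
  unfolding uu_def by (rule uu_cl1[unfolded uu_def])

lemma aq_loc: "\<exists>e. z * uu n = cl n e"
proof -
  obtain f where z: "z = abs_aq f" by (metis Quotient_aq Quotient_abs_rep)
  have "z * uu n = cl n (f n)"
    unfolding z uu_def
    apply transfer
    apply (auto simp: weqall_def intro: weq.mul_one_r)
    apply (meson weq.mul_zero_l weq.scal_comm weq.trans weq.sym)
    done
  then show ?thesis by blast
qed

lemma cl_esub: "cl n (esub a b) = cl n a - cl n b"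
  unfolding esub_def cl_Add cl_Mul cl_Scal
  by (simp add: mult.assoc uu_cl1 sc_m1)

lemma cl_esum: "cl n (esum f l) = sum_list (map (\<lambda>a. cl n (f a)) l)"
  by (induction l) (auto simp: cl_Add cl_Scal sc_0)

lemma cl_eprod: "cl n (eprod es) = foldr (\<lambda>e z. cl n e * z) es (uu n)"
  by (induction es) (auto simp: cl_Mul cl_Scal sc_1)

lemma cl_epow: "cl n (epow e k) = uu n * cl n e ^ k"
  apply (induction k)
   apply (auto simp: cl_Mul cl_Scal sc_1)
  by (metis mult.assoc uu_cl1 uu_cl2)


definition scl :: "complex \<Rightarrow> aq \<Rightarrow> aq" where "scl c z = sc c * z"

lemma scl_mult_left[simp]: "scl c z * w = scl c (z * w)"
  by (simp add: scl_def mult.assoc)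
lemma mult_scl[simp]: "z * scl c w = scl c (z * w)"
  by (metis scl_def mult.assoc sc_central)
lemma scl_scl[simp]: "scl c (scl d z) = scl (c * d) z"
  by (simp add: scl_def sc_mult mult.assoc)
lemma scl_add[simp]: "scl c (z + w) = scl c z + scl c w"
  by (simp add: scl_def distrib_left)
lemma scl_diff[simp]: "scl c (z - w) = scl c z - scl c w"
  by (simp add: scl_def right_diff_distrib)
lemma scl_uminus[simp]: "scl c (- z) = - scl c z"
  by (simp add: scl_def)
lemma scl_zero[simp]: "scl c 0 = 0" by (simp add: scl_def)
lemma scl_0[simp]: "scl 0 z = 0" by (simp add: scl_def sc_0)
lemma scl_1[simp]: "scl 1 z = z" by (simp add: scl_def sc_1)
lemma scl_sum: "scl c (sum f A) = (\<Sum>a\<in>A. scl c (f a))"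
  by (simp add: scl_def sum_distrib_left)
lemma scl_add_left: "scl (c + d) z = scl c z + scl d z"
  by (simp add: scl_def sc_add distrib_right)
lemma scl_m1: "scl (-1) z = - z" by (simp add: scl_def sc_m1)
lemma scl_uminus_left: "scl (- c) z = - scl c z"
  by (metis mult_minus1 scl_m1 scl_scl)

definition central :: "aq \<Rightarrow> bool" where "central c \<longleftrightarrow> (\<forall>w. c * w = w * c)"

lemma central_commute: "central c \<Longrightarrow> w * c = c * w"
  by (simp add: central_def)
lemma central_lcommute: "central c \<Longrightarrow> w * (c * v) = c * (w * v)"
  by (metis central_def mult.assoc)
lemma central_uu[simp]: "central (uu n)"
  by (simp add: central_def uu_central)

lemma central_of_cl:
  assumes "\<And>e. c * cl n e = cl n e * c" and "c * uu n = c"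
  shows "central c"
  unfolding central_def
proof
  fix w
  obtain e where e: "w * uu n = cl n e" using aq_loc by blast
  have "c * w = c * uu n * w" using assms(2) by simp
  also have "\<dots> = c * (w * uu n)" by (simp add: mult.assoc uu_central)
  also have "\<dots> = (w * uu n) * c" unfolding e by (rule assms(1))
  also have "\<dots> = w * (uu n * c)" by (simp add: mult.assoc)
  also have "\<dots> = w * c" using assms(2) uu_central by metis
  finally show "c * w = w * c" .
qed

lemma cl_kill: "\<not> valid_gen n g \<Longrightarrow> cl n (Gen g) = 0"
  using cl_eq_iff[of n "Gen g" "Scal 0"] weq.kill[of n g] by (simp add: cl_Scal sc_0)

lemma cl_MulScal: "cl n (Mul (Scal c) e) = scl c (cl n e)"
  by (simp add: cl_Mul cl_Scal scl_def mult.assoc uu_cl1)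

lemma cl_esum_idx: "cl n (esum f (idx n)) = (\<Sum>a\<in>{1..n}. cl n (f a))"
proof -
  have "cl n (esum f (idx n)) = sum_list (map (\<lambda>a. cl n (f a)) [1..<Suc n])"
    by (simp add: cl_esum idx_def)
  also have "\<dots> = (\<Sum>a\<in>set [1..<Suc n]. cl n (f a))"
    by (rule sum_set_upt_conv_sum_list_nat[symmetric])
  also have "set [1..<Suc n] = {1..n}" by auto
  finally show ?thesis .
qed

context
  fixes n :: nat
begin

abbreviation "u \<equiv> uu n"
abbreviation Xg where "Xg a \<equiv> cl n (Gen (X a))"
abbreviation Dg where "Dg a \<equiv> cl n (Gen (D a))"
abbreviation Yg where "Yg a b \<equiv> cl n (Gen (Eta a b))"
abbreviation Ug where "Ug a b \<equiv> cl n (Gen (EtaU a b))"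
abbreviation iv where "iv p \<equiv> cl n (Gen (Inv p))"

lemma X_out: "a \<notin> {1..n} \<Longrightarrow> Xg a = 0" by (rule cl_kill) simp
lemma D_out: "a \<notin> {1..n} \<Longrightarrow> Dg a = 0" by (rule cl_kill) simp
lemma Y_out: "a \<notin> {1..n} \<or> b \<notin> {1..n} \<Longrightarrow> Yg a b = 0" by (rule cl_kill) auto
lemma U_out: "a \<notin> {1..n} \<or> b \<notin> {1..n} \<Longrightarrow> Ug a b = 0" by (rule cl_kill) auto

lemma XX: "Xg a * Xg b = Xg b * Xg a"
  using weq.xx[of n a b] unfolding cl_eq_iff[symmetric] cl_Mul .
lemma DD: "Dg a * Dg b = Dg b * Dg a"
  using weq.dd[of n a b] unfolding cl_eq_iff[symmetric] cl_Mul .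

lemma DX: "Dg a * Xg b = Xg b * Dg a + (if a = b \<and> a \<in> {1..n} then u else 0)"
proof (cases "a \<in> {1..n} \<and> b \<in> {1..n}")
  case True
  have "weq n (esub (Mul (Gen (D a)) (Gen (X b))) (Mul (Gen (X b)) (Gen (D a))))
       (Scal (if a = b then 1 else 0))"
    using True by (intro weq.dx) auto
  then have "cl n (esub (Mul (Gen (D a)) (Gen (X b))) (Mul (Gen (X b)) (Gen (D a))))
       = cl n (Scal (if a = b then 1 else 0))"
    unfolding cl_eq_iff .
  then have "Dg a * Xg b - Xg b * Dg a = (if a = b then u else 0)"
    unfolding cl_esub cl_Mul cl_Scal by (simp add: sc_1 sc_0)
  then show ?thesis using True by (simp add: diff_eq_eq add.commute)
next
  case False
  then have "Dg a = 0 \<or> Xg b = 0" using X_out D_out by blast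
  then show ?thesis using False by auto
qed

lemma Ysym: "Yg a b = Yg b a"
  using cl_eq_iff weq.eta_sym by blast

lemma Y_wgen: "is_wgen g \<Longrightarrow> Yg a b * cl n (Gen g) = cl n (Gen g) * Yg a b"
  using weq.eta_central[of g n a b] unfolding cl_eq_iff[symmetric] cl_Mul .
lemma U_wgen: "is_wgen g \<Longrightarrow> Ug a b * cl n (Gen g) = cl n (Gen g) * Ug a b"
  using weq.etaU_central[of g n a b] unfolding cl_eq_iff[symmetric] cl_Mul .

lemma YU: "(\<Sum>b\<in>{1..n}. Yg a b * Ug b c) = (if a = c \<and> a \<in> {1..n} then u else 0)"
proof (cases "a \<in> {1..n} \<and> c \<in> {1..n}")
  case True
  have "weq n (esum (\<lambda>b. Mul (Gen (Eta a b)) (Gen (EtaU b c))) (idx n))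
       (Scal (if a = c then 1 else 0))"
    using True by (intro weq.eta_inv) auto
  then have "cl n (esum (\<lambda>b. Mul (Gen (Eta a b)) (Gen (EtaU b c))) (idx n))
       = cl n (Scal (if a = c then 1 else 0))"
    unfolding cl_eq_iff .
  then show ?thesis using True unfolding cl_esum_idx cl_Mul cl_Scal by (simp add: sc_1 sc_0)
next
  case False
  then have "\<And>b. Yg a b * Ug b c = 0" using Y_out U_out by (metis mult_zero_left mult_zero_right)
  then show ?thesis using False by auto
qed

lemma inv_l: "p \<noteq> 0 \<Longrightarrow> cl n (evalH n p) * iv p = u"
  using weq.inv_l[of p n] unfolding cl_eq_iff[symmetric] cl_Mul cl_Scal sc_1 mult_1_left .
lemma inv_r: "p \<noteq> 0 \<Longrightarrow> iv p * cl n (evalH n p) = u"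
  using weq.inv_r[of p n] unfolding cl_eq_iff[symmetric] cl_Mul cl_Scal sc_1 mult_1_left .

end

lemma uu_cl1': "uu n * (cl n e * w) = cl n e * w"
  by (simp add: uu_cl1 flip: mult.assoc)
lemma uu_cl2': "cl n e * (uu n * w) = cl n e * w"
  by (simp add: uu_cl2 flip: mult.assoc)
lemma if_mult: "(if P then a else b) * z = (if P then a * z else b * z)" by simp
lemma mult_if: "z * (if P then a else b) = (if P then z * a else z * b)" by simp

lemma sum_delta_uu: "finite A \<Longrightarrow> (\<Sum>k\<in>A. if k = a then f k else 0) = (if a \<in> A then f a else 0)"
  by simp

context
  fixes n :: nat
begin

lemma X_X': "Xg n a * (Xg n b * z) = Xg n b * (Xg n a * z)"
  by (metis XX mult.assoc)
lemma D_D': "Dg n a * (Dg n b * z) = Dg n b * (Dg n a * z)"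
  by (metis DD mult.assoc)
lemma DX': "Dg n a * (Xg n b * z) = Xg n b * (Dg n a * z) + (if a = b \<and> a \<in> {1..n} then uu n * z else 0)"
  by (simp add: DX distrib_right flip: mult.assoc)

definition Ha where "Ha = scl (-1/2) (\<Sum>a\<in>{1..n}. Xg n a * Dg n a + Dg n a * Xg n a)"

lemma cl_H: "cl n (Hexpr n) = Ha"
  unfolding Hexpr_def cl_MulScal unfolding cl_esum_idx cl_Add cl_Mul Ha_def ..

definition hp where "hp p = cl n (evalH n p)"

lemma hp_sum: "hp p = (\<Sum>i<Suc (degree p). scl (coeff p i) (uu n * Ha ^ i))"
proof -
  have "hp p = sum_list (map (\<lambda>i. scl (coeff p i) (uu n * Ha ^ i)) [0..<Suc (degree p)])"
    unfolding hp_def evalH_def cl_esum cl_MulScal cl_epow cl_H ..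
  also have "\<dots> = (\<Sum>i\<in>set [0..<Suc (degree p)]. scl (coeff p i) (uu n * Ha ^ i))"
    by (rule sum_set_upt_conv_sum_list_nat[symmetric])
  also have "set [0..<Suc (degree p)] = {..<Suc (degree p)}" by auto
  finally show ?thesis .
qed

lemma Ha_loc: "uu n * Ha = Ha" "Ha * uu n = Ha"
  by (metis cl_H uu_cl1, metis cl_H uu_cl2)

lemma hp_loc: "uu n * hp p = hp p" "hp p * uu n = hp p"
  unfolding hp_def by (rule uu_cl1, rule uu_cl2)

lemma comm_hp:
  assumes "c * Ha = Ha * c"
  shows "c * hp p = hp p * c"
proof -
  have "c * (uu n * Ha ^ i) = (uu n * Ha ^ i) * c" for i
    by (metis assms mult.assoc power_commuting_commutes uu_central)
  then show ?thesis
    unfolding hp_sum sum_distrib_left sum_distrib_right by (intro sum.cong) auto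
qed

lemma comm_iv:
  assumes "c * hp p = hp p * c" "c * uu n = c" "uu n * c = c"
  shows "c * iv n p = iv n p * c"
proof (cases "p = 0")
  case True
  then show ?thesis using cl_kill[of n "Inv p"] by simp
next
  case False
  have "iv n p * c = iv n p * c * (hp p * iv n p)"
    using inv_l[OF False] assms(2) by (simp add: hp_def mult.assoc)
  also have "\<dots> = iv n p * (hp p * c) * iv n p"
    using assms(1) by (metis mult.assoc)
  also have "\<dots> = (iv n p * hp p) * c * iv n p" by (simp add: mult.assoc)
  also have "\<dots> = c * iv n p"
    using inv_r[OF False] assms(3) by (simp add: hp_def)
  finally show ?thesis by simp
qed

lemma central_gen:
  assumes wg: "\<And>g. is_wgen g \<Longrightarrow> c * cl n (Gen g) = cl n (Gen g) * c"
    and l: "c * uu n = c"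
  shows "central c"
proof -
  have l2: "uu n * c = c" using l uu_central by metis
  have cX: "c * Xg n a = Xg n a * c" for a using wg by simp
  have cD: "c * Dg n a = Dg n a * c" for a using wg by simp
  have cH: "c * Ha = Ha * c"
    unfolding Ha_def
    by (simp add: sum_distrib_left sum_distrib_right distrib_left distrib_right
          flip: mult.assoc add: cX cD) (simp add: mult.assoc cX cD)
  have all: "c * cl n e = cl n e * c" for e
  proof (induction e)
    case (Gen g)
    show ?case
    proof (cases g)
      case (Inv p)
      then show ?thesis using comm_iv[OF comm_hp[OF cH] l l2] by simp
    qed (auto intro: wg)
  next
    case (Scal x)
    then show ?case by (simp add: cl_Scal mult.assoc uu_central flip: sc_central) (metis mult.assoc sc_central)
  next
    case (Add e1 e2)
    then show ?case by (simp add: cl_Add distrib_left distrib_right)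
  next
    case (Mul e1 e2)
    then show ?case by (simp add: cl_Mul flip: mult.assoc) (metis mult.assoc)
  qed
  show ?thesis by (rule central_of_cl[OF all l])
qed

lemma central_Y: "central (Yg n a b)"
  by (rule central_gen) (auto intro: Y_wgen uu_cl2)
lemma central_U: "central (Ug n a b)"
  by (rule central_gen) (auto intro: U_wgen uu_cl2)

end

lemma scl_double: "z + z = scl 2 z"
  by (metis one_add_one scl_1 scl_add_left)

definition Sn :: "nat \<Rightarrow> nat set" where "Sn n = {1..n}"
lemma finite_Sn[simp]: "finite (Sn n)" by (simp add: Sn_def)

context
  fixes n :: nat
begin

lemma if0_mult: "(if P then a else 0) * z = (if P then a * z else (0::aq))" by simp
lemma mult_if0: "z * (if P then a else 0) = (if P then z * a else (0::aq))" by simp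

lemma DXS: "Dg n a * Xg n b = Xg n b * Dg n a + (if a = b \<and> a \<in> Sn n then uu n else 0)"
  unfolding Sn_def by (rule DX)

lemma YU': "(\<Sum>b\<in>Sn n. Yg n a b * Ug n b c) = (if a = c \<and> a \<in> Sn n then uu n else 0)"
  unfolding Sn_def by (rule YU)

lemma Usym: "Ug n a c = Ug n c a"
proof (cases "a \<in> Sn n \<and> c \<in> Sn n")
  case False
  then show ?thesis using U_out unfolding Sn_def by auto
next
  case True
  have e1: "(\<Sum>b\<in>Sn n. (\<Sum>d\<in>Sn n. Yg n b d * Ug n d c) * Ug n b a) = Ug n c a"
    using True by (simp add: YU' if0_mult uu_cl1 Sn_def[symmetric])
  have e2: "(\<Sum>b\<in>Sn n. (\<Sum>d\<in>Sn n. Yg n b d * Ug n d c) * Ug n b a)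
      = (\<Sum>d\<in>Sn n. Ug n d c * (\<Sum>b\<in>Sn n. Yg n d b * Ug n b a))"
    unfolding sum_distrib_left sum_distrib_right
    apply (subst sum.swap)
    apply (intro sum.cong HOL.refl)
    subgoal for x y
      using Ysym[of n y x] central_lcommute[OF central_U[of n x c], where w="Yg n x y" and v="Ug n y a"]
      by (simp add: mult.assoc)
    done
  have e3: "(\<Sum>d\<in>Sn n. Ug n d c * (\<Sum>b\<in>Sn n. Yg n d b * Ug n b a)) = Ug n a c"
    using True by (simp add: YU' mult_if0 uu_cl2 Sn_def[symmetric])
  show ?thesis using e1 e2 e3 by simp
qed

lemma UY: "(\<Sum>b\<in>Sn n. Ug n a b * Yg n b c) = (if a = c \<and> a \<in> Sn n then uu n else 0)"
proof -
  have "(\<Sum>b\<in>Sn n. Ug n a b * Yg n b c) = (\<Sum>b\<in>Sn n. Yg n c b * Ug n b a)"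
  proof (rule sum.cong[OF HOL.refl])
    fix x
    have "Ug n a x = Ug n x a" by (rule Usym)
    moreover have "Yg n x c = Yg n c x" by (rule Ysym)
    ultimately show "Ug n a x * Yg n x c = Yg n c x * Ug n x a"
      by (simp add: central_commute[OF central_Y])
  qed
  then show ?thesis by (auto simp: YU')
qed

definition dup where "dup a = (\<Sum>c\<in>Sn n. Ug n a c * Dg n c)"
definition xl where "xl a = (\<Sum>b\<in>Sn n. Yg n a b * Xg n b)"
definition Ea where "Ea = scl (\<i>/2) (\<Sum>a\<in>Sn n. Dg n a * dup a)"
definition Fa where "Fa = scl (\<i>/2) (\<Sum>a\<in>Sn n. xl a * Xg n a)"

lemma cl_E: "cl n (Eexpr n) = Ea"
  unfolding Eexpr_def cl_MulScal unfolding cl_esum_idx cl_Mul Ea_def dup_def Sn_def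
  by (simp add: sum_distrib_left)

lemma cl_F: "cl n (Fexpr n) = Fa"
  unfolding Fexpr_def cl_MulScal unfolding cl_esum_idx cl_Mul Fa_def xl_def Sn_def
  by (simp add: sum_distrib_right)

lemma dup_X: "c \<in> Sn n \<Longrightarrow> dup a * Xg n c = Xg n c * dup a + Ug n a c"
  unfolding dup_def sum_distrib_right sum_distrib_left
  by (simp add: mult.assoc DXS distrib_left distrib_right sum.distrib mult_if0 uu_cl2
       central_lcommute[OF central_U] central_commute[OF central_U] Sn_def[symmetric])

end

context
  fixes n :: nat
begin

lemma HaS: "Ha n = scl (-1/2) (\<Sum>a\<in>Sn n. Xg n a * Dg n a + Dg n a * Xg n a)"
  unfolding Ha_def Sn_def ..

lemmas XS_out = X_out[of _ n, folded Sn_def]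

lemma DXS': "Dg n a * (Xg n b * z) = Xg n b * (Dg n a * z) + (if a = b \<and> a \<in> Sn n then uu n * z else 0)"
  by (simp add: DXS distrib_right if0_mult flip: mult.assoc)

lemma H_X0: "c \<in> Sn n \<Longrightarrow> Ha n * Xg n c = Xg n c * Ha n + scl (-1/2) (Xg n c + Xg n c)"
  unfolding HaS
  by (simp add: sum_distrib_left sum_distrib_right distrib_left distrib_right mult.assoc
      DXS DXS' X_X' XX sum.distrib mult_if0 if0_mult uu_cl1 uu_cl2)

lemma sum_if_cc: "(\<Sum>y\<in>B. if P then f y else (0::aq)) = (if P then sum f B else 0)"
  by simp

lemma cmv:
  "Xg n a * Yg n b c = Yg n b c * Xg n a" "Xg n a * (Yg n b c * w) = Yg n b c * (Xg n a * w)"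
  "Dg n a * Yg n b c = Yg n b c * Dg n a" "Dg n a * (Yg n b c * w) = Yg n b c * (Dg n a * w)"
  "Xg n a * Ug n b c = Ug n b c * Xg n a" "Xg n a * (Ug n b c * w) = Ug n b c * (Xg n a * w)"
  "Dg n a * Ug n b c = Ug n b c * Dg n a" "Dg n a * (Ug n b c * w) = Ug n b c * (Dg n a * w)"
  "Ug n a d * Yg n b c = Yg n b c * Ug n a d" "Ug n a d * (Yg n b c * w) = Yg n b c * (Ug n a d * w)"
  "Yg n a d * Yg n b c = Yg n b c * Yg n a d" "Yg n a d * (Yg n b c * w) = Yg n b c * (Yg n a d * w)"
  "Ug n a d * Ug n b c = Ug n b c * Ug n a d" "Ug n a d * (Ug n b c * w) = Ug n b c * (Ug n a d * w)"
  by (rule central_commute[OF central_Y] central_lcommute[OF central_Y]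
      central_commute[OF central_U] central_lcommute[OF central_U])+

lemmas nsimps = cmv sum_if_cc sum_distrib_left sum_distrib_right distrib_left distrib_right mult.assoc
      DXS DXS' X_X' XX D_D' DD sum.distrib mult_if0 if0_mult uu_cl1 uu_cl2 uu_cl1' uu_cl2'
      left_diff_distrib right_diff_distrib sum_subtractf

lemma H_D0: "c \<in> Sn n \<Longrightarrow> Ha n * Dg n c = Dg n c * Ha n + scl (-1/2) (- Dg n c - Dg n c)"
  unfolding HaS
  by (simp add: nsimps)

lemma D_xl: "a \<in> Sn n \<Longrightarrow> Dg n a * xl n b = xl n b * Dg n a + Yg n b a"
  unfolding xl_def by (simp add: nsimps)

lemma X_xl: "Xg n a * xl n b = xl n b * Xg n a"
  unfolding xl_def by (simp add: nsimps)

lemma D_dup: "Dg n a * dup n b = dup n b * Dg n a"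
  unfolding dup_def by (simp add: nsimps)

lemma D_F0: "c \<in> Sn n \<Longrightarrow> Dg n c * Fa n = Fa n * Dg n c + scl (\<i>/2) (xl n c + xl n c)"
  unfolding Fa_def xl_def by (simp add: nsimps Ysym[of n])

lemma X_xl': "Xg n a * (xl n b * w) = xl n b * (Xg n a * w)"
  by (simp add: X_xl flip: mult.assoc)

lemma X_F: "Xg n a * Fa n = Fa n * Xg n a"
  unfolding Fa_def by (simp add: nsimps X_xl')

lemma dup_dup: "dup n a * dup n b = dup n b * dup n a"
  unfolding dup_def apply (simp add: nsimps) apply (subst sum.swap) by (simp add: nsimps)

lemma E_X0: "c \<in> Sn n \<Longrightarrow> Ea n * Xg n c = Xg n c * Ea n + scl (\<i>/2) (dup n c + dup n c)"
  unfolding Ea_def dup_def by (simp add: nsimps Usym[of n])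

lemma scl_half_double: "scl (c/2) (z + z) = scl c z"
  by (simp add: scl_double)

lemma D_F: assumes "c \<in> Sn n" shows "Dg n c * Fa n = Fa n * Dg n c + scl \<i> (xl n c)"
  using D_F0[OF assms, unfolded scl_half_double] .

lemma E_X: assumes "c \<in> Sn n" shows "Ea n * Xg n c = Xg n c * Ea n + scl \<i> (dup n c)"
  using E_X0[OF assms, unfolded scl_half_double] .

lemma Fa_U: "Fa n * (Ug n a c * w) = Ug n a c * (Fa n * w)"
  by (rule central_lcommute[OF central_U])

lemma dup_F: "a \<in> Sn n \<Longrightarrow> dup n a * Fa n = Fa n * dup n a + scl \<i> (Xg n a)"
proof -
  assume a: "a \<in> Sn n"
  have "dup n a * Fa n = (\<Sum>c\<in>Sn n. Ug n a c * (Dg n c * Fa n))"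
    unfolding dup_def by (simp add: sum_distrib_right mult.assoc)
  also have "\<dots> = (\<Sum>c\<in>Sn n. Ug n a c * (Fa n * Dg n c) + scl \<i> (Ug n a c * xl n c))"
    by (intro sum.cong HOL.refl) (simp add: D_F distrib_left)
  also have "\<dots> = Fa n * dup n a + scl \<i> (\<Sum>c\<in>Sn n. Ug n a c * xl n c)"
    unfolding dup_def by (simp add: sum.distrib sum_distrib_left scl_sum Fa_U)
  also have "(\<Sum>c\<in>Sn n. Ug n a c * xl n c) = (\<Sum>c\<in>Sn n. \<Sum>b\<in>Sn n. Ug n a c * Yg n c b * Xg n b)"
    unfolding xl_def by (simp add: sum_distrib_left mult.assoc)
  also have "\<dots> = (\<Sum>b\<in>Sn n. (\<Sum>c\<in>Sn n. Ug n a c * Yg n c b) * Xg n b)"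
    by (subst sum.swap) (simp add: sum_distrib_right)
  also have "\<dots> = Xg n a"
    using a by (simp add: UY if0_mult uu_cl1)
  finally show ?thesis .
qed

lemma E_dup: "Ea n * dup n c = dup n c * Ea n"
proof -
  have "Dg n a * (dup n a * dup n c) = dup n c * (Dg n a * dup n a)" for a
    by (metis dup_dup D_dup mult.assoc)
  then show ?thesis
    unfolding Ea_def by (simp add: sum_distrib_left sum_distrib_right mult.assoc)
qed

lemma xl_dup_sum: "(\<Sum>a\<in>Sn n. xl n a * dup n a) = (\<Sum>a\<in>Sn n. Xg n a * Dg n a)"
proof -
  have "(\<Sum>b\<in>Sn n. \<Sum>c\<in>Sn n. (\<Sum>a\<in>Sn n. Yg n b a * Ug n a c) * (Xg n b * Dg n c))
       = (\<Sum>b\<in>Sn n. Xg n b * Dg n b)"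
    by (simp add: YU' if0_mult uu_cl1 uu_cl1')
  moreover have "(\<Sum>b\<in>Sn n. \<Sum>c\<in>Sn n. (\<Sum>a\<in>Sn n. Yg n b a * Ug n a c) * (Xg n b * Dg n c))
       = (\<Sum>b\<in>Sn n. \<Sum>c\<in>Sn n. \<Sum>a\<in>Sn n. Yg n b a * Ug n a c * (Xg n b * Dg n c))"
    unfolding sum_distrib_right ..
  moreover have "\<dots> = (\<Sum>c\<in>Sn n. \<Sum>b\<in>Sn n. \<Sum>a\<in>Sn n. Yg n b a * Ug n a c * (Xg n b * Dg n c))"
    by (rule sum.swap)
  moreover have "\<dots> = (\<Sum>c\<in>Sn n. \<Sum>a\<in>Sn n. \<Sum>b\<in>Sn n. Yg n b a * Ug n a c * (Xg n b * Dg n c))"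
    by (intro sum.cong HOL.refl sum.swap)
  moreover have "\<dots> = (\<Sum>a\<in>Sn n. \<Sum>c\<in>Sn n. \<Sum>b\<in>Sn n. Yg n b a * Ug n a c * (Xg n b * Dg n c))"
    by (rule sum.swap)
  moreover have "(\<Sum>a\<in>Sn n. xl n a * dup n a) = \<dots>"
    unfolding xl_def dup_def by (simp add: nsimps Ysym[of n])
  ultimately show ?thesis by simp
qed

lemma E_F: "Ea n * Fa n = Fa n * Ea n + Ha n"
proof -
  have "Ea n * Fa n = scl (\<i>/2) (\<Sum>a\<in>Sn n. Dg n a * (dup n a * Fa n))"
    unfolding Ea_def by (simp add: sum_distrib_right mult.assoc)
  also have "\<dots> = scl (\<i>/2) (\<Sum>a\<in>Sn n. Fa n * (Dg n a * dup n a) + scl \<i> (xl n a * dup n a)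
        + scl \<i> (Dg n a * Xg n a))"
    by (intro arg_cong[where f="scl (\<i>/2)"] sum.cong HOL.refl)
      (simp add: dup_F D_F distrib_left distrib_right flip: mult.assoc)
  also have "\<dots> = Fa n * Ea n + scl (-1/2) ((\<Sum>a\<in>Sn n. xl n a * dup n a) + (\<Sum>a\<in>Sn n. Dg n a * Xg n a))"
    unfolding Ea_def by (simp add: sum.distrib scl_sum sum_distrib_left)
  also have "\<dots> = Fa n * Ea n + Ha n"
    unfolding xl_dup_sum HaS by (simp add: sum.distrib)
  finally show ?thesis .
qed

end

context
  fixes n :: nat
begin

definition shift where "shift c Z \<longleftrightarrow> Z * Ha n = (Ha n + scl c (uu n)) * Z"

lemma uu_scl: "uu n * scl c z = scl c (uu n * z)" by simp

lemma shift_X: "shift 1 (Xg n a)"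
proof (cases "a \<in> Sn n")
  case True
  show ?thesis using H_X0[OF True] unfolding shift_def
    by (simp add: scl_double distrib_right uu_cl1 scl_m1)
next
  case False
  then show ?thesis using XS_out by (simp add: shift_def)
qed

lemma shift_D: "shift (-1) (Dg n a)"
proof (cases "a \<in> Sn n")
  case True
  have m2: "- Dg n a - Dg n a = scl (-2) (Dg n a)"
    by (simp only: scl_uminus_left scl_double[symmetric] minus_add_distrib diff_conv_add_uminus)
  have "Ha n * Dg n a = Dg n a * Ha n + scl (-1/2) (- Dg n a - Dg n a)" by (rule H_D0[OF True])
  also have "scl (-1/2) (- Dg n a - Dg n a) = Dg n a"
    unfolding m2 by simp
  finally have e: "Ha n * Dg n a = Dg n a * Ha n + Dg n a" .
  have "(Ha n + scl (-1) (uu n)) * Dg n a = Ha n * Dg n a - Dg n a"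
    by (simp add: distrib_right left_diff_distrib uu_cl1 scl_m1)
  also have "\<dots> = Dg n a * Ha n" unfolding e by simp
  finally show ?thesis unfolding shift_def by simp
next
  case False
  then show ?thesis using D_out[of a n] by (simp add: shift_def Sn_def)
qed

definition loc where "loc z \<longleftrightarrow> uu n * z = z"

lemma loc_cl: "loc (cl n e)" by (simp add: loc_def uu_cl1)
lemma loc_mult: "loc a \<Longrightarrow> loc (a * b)" by (simp add: loc_def flip: mult.assoc)
lemma loc_add: "loc a \<Longrightarrow> loc b \<Longrightarrow> loc (a + b)" by (simp add: loc_def distrib_left)
lemma loc_scl: "loc a \<Longrightarrow> loc (scl c a)" by (simp add: loc_def)
lemma loc_sum: "(\<And>i. i \<in> A \<Longrightarrow> loc (f i)) \<Longrightarrow> loc (sum f A)"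
  by (simp add: loc_def sum_distrib_left)
lemma loc_r: "loc a \<Longrightarrow> a * uu n = a" by (metis loc_def uu_central)

lemma shift_mult:
  assumes "shift c1 Z1" "shift c2 Z2" "loc Z2"
  shows "shift (c1 + c2) (Z1 * Z2)"
proof -
  have u: "uu n * (Z1 * Z2) = Z1 * Z2"
    using assms(3) by (metis loc_def mult.assoc uu_central)
  have "Z1 * Z2 * Ha n = Z1 * (Ha n + scl c2 (uu n)) * Z2"
    using assms(2) unfolding shift_def by (simp add: mult.assoc)
  also have "\<dots> = (Ha n + scl c1 (uu n)) * Z1 * Z2 + scl c2 (Z1 * Z2)"
    using assms(1,3) unfolding shift_def loc_def
    by (simp add: distrib_left distrib_right mult.assoc)
  also have "\<dots> = (Ha n + scl (c1 + c2) (uu n)) * (Z1 * Z2)"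
    using u by (simp add: distrib_right scl_add_left mult.assoc add.assoc)
  finally show ?thesis unfolding shift_def .
qed

lemma shift_add: "shift c Z1 \<Longrightarrow> shift c Z2 \<Longrightarrow> shift c (Z1 + Z2)"
  unfolding shift_def by (simp add: distrib_left distrib_right)

lemma shift_scl: "shift c Z \<Longrightarrow> shift c (scl d Z)"
  unfolding shift_def by simp

lemma shift_zero: "shift c 0"
  unfolding shift_def by simp

lemma shift_sum: "(\<And>i. i \<in> A \<Longrightarrow> shift c (f i)) \<Longrightarrow> shift c (sum f A)"
proof (induction A rule: infinite_finite_induct)
  case (insert x F)
  then show ?case by (simp add: shift_add)
qed (simp_all add: shift_zero)

lemma shift_central: "central Z \<Longrightarrow> shift 0 Z"
  unfolding shift_def by (simp add: central_def)

lemma shift_dup: "shift (-1) (dup n a)"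
  unfolding dup_def
  by (rule shift_sum) (metis add_0 shift_mult shift_central central_U shift_D loc_cl)

lemma shift_xl: "shift 1 (xl n a)"
  unfolding xl_def
  by (rule shift_sum) (metis add_0 shift_mult shift_central central_Y shift_X loc_cl)

lemma shift_F: "shift 2 (Fa n)"
  unfolding Fa_def
  by (rule shift_scl, rule shift_sum) (metis one_add_one shift_mult shift_xl shift_X loc_cl)

lemma shift_E: "shift (-2) (Ea n)"
proof -
  have "loc (dup n a)" for a unfolding dup_def by (intro loc_sum loc_mult loc_cl)
  then show ?thesis
    unfolding Ea_def
    by (intro shift_scl shift_sum) (metis shift_mult shift_D shift_dup add_uminus_conv_diff diff_minus_eq_add
        minus_add_distrib one_add_one)
qed

end

context
  fixes n :: nat
begin

lemma hp_ext: "degree p < N \<Longrightarrow> hp n p = (\<Sum>i<N. scl (coeff p i) (uu n * Ha n ^ i))"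
  unfolding hp_sum
  by (rule sum.mono_neutral_right[symmetric]) (auto simp: coeff_eq_0)

lemma hp_0: "hp n 0 = 0" by (simp add: hp_sum)

lemma hp_add: "hp n (p + q) = hp n p + hp n q"
proof -
  define N where "N = Suc (max (degree p) (degree q))"
  have "degree (p + q) < N" unfolding N_def using degree_add_le_max[of p q] by linarith
  then show ?thesis
    using hp_ext[of "p + q" N] hp_ext[of p N] hp_ext[of q N] unfolding N_def
    by (simp add: scl_add_left sum.distrib)
qed

lemma hp_smult: "hp n (smult c p) = scl c (hp n p)"
proof -
  have "degree (smult c p) < Suc (degree p)" using degree_smult_le[of c p] by linarith
  then show ?thesis using hp_ext[of "smult c p" "Suc (degree p)"] hp_sum[of n p]
    by (simp add: scl_sum)
qed

lemma hp_pCons: "hp n (pCons a p) = scl a (uu n) + Ha n * hp n p"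
proof -
  have d: "degree (pCons a p) < Suc (Suc (degree p))"
    by (metis degree_pCons_le le_imp_less_Suc)
  have "hp n (pCons a p) = (\<Sum>i<Suc (Suc (degree p)). scl (coeff (pCons a p) i) (uu n * Ha n ^ i))"
    by (rule hp_ext[OF d])
  also have "\<dots> = scl a (uu n) + (\<Sum>i<Suc (degree p). scl (coeff p i) (uu n * Ha n ^ Suc i))"
    by (subst sum.lessThan_Suc_shift) simp
  also have "(\<Sum>i<Suc (degree p). scl (coeff p i) (uu n * Ha n ^ Suc i)) = Ha n * hp n p"
  proof -
    have e: "uu n * Ha n ^ Suc i = Ha n * (uu n * Ha n ^ i)" for i
      by (metis mult.assoc uu_central power_Suc)
    show ?thesis unfolding hp_sum sum_distrib_left e by simp
  qed
  finally show ?thesis .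
qed

lemma hp_const: "hp n [:c:] = scl c (uu n)"
  by (simp add: hp_pCons hp_0)

lemma hp_lin: "hp n [:c, 1:] = Ha n + scl c (uu n)"
  by (simp add: hp_pCons hp_0 hp_const Ha_loc add.commute)

lemma hp_mult: "hp n (p * q) = hp n p * hp n q"
proof (induction p)
  case 0
  then show ?case by (simp add: hp_0)
next
  case (pCons a p)
  then show ?case
    by (simp add: hp_add hp_smult hp_pCons distrib_right mult.assoc hp_loc)
qed

lemma hp_comm: "hp n p * hp n q = hp n q * hp n p"
  by (metis hp_mult mult.commute)

lemma shift_hp:
  assumes "shift n c Z"
  shows "Z * hp n p = hp n (pcompose p [:c, 1:]) * Z"
proof (induction p)
  case 0
  then show ?case by (simp add: hp_0)
next
  case (pCons a p)
  have "Z * hp n (pCons a p) = scl a (Z * uu n) + (Z * Ha n) * hp n p"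
    by (simp add: hp_pCons distrib_left mult.assoc)
  also have "\<dots> = scl a (uu n * Z) + (Ha n + scl c (uu n)) * (Z * hp n p)"
    using assms unfolding shift_def by (simp add: uu_central mult.assoc)
  also have "\<dots> = hp n (pcompose (pCons a p) [:c, 1:]) * Z"
  proof -
    have "hp n (pcompose (pCons a p) [:c, 1:]) = scl a (uu n) + (Ha n + scl c (uu n)) * hp n (pcompose p [:c, 1:])"
      by (simp only: pcompose_pCons hp_add hp_mult hp_const hp_lin)
    then show ?thesis by (simp add: pCons.IH distrib_right mult.assoc)
  qed
  finally show ?case .
qed

lemma iv_shift:
  assumes "shift n c Z" "Z * uu n = Z" "p \<noteq> 0"
  shows "Z * iv n p = iv n (pcompose p [:c, 1:]) * Z"
proof -
  define q where "q = pcompose p [:c, 1:]"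
  have q0: "q \<noteq> 0" unfolding q_def using assms(3) pcompose_eq_0[of p "[:c,1:]"] by auto
  have uZ: "uu n * Z = Z" using assms(2) uu_central by metis
  have "iv n q * Z = iv n q * Z * (hp n p * iv n p)"
    using inv_l[OF assms(3)] assms(2) by (simp add: hp_def mult.assoc)
  also have "\<dots> = iv n q * (Z * hp n p) * iv n p" by (simp add: mult.assoc)
  also have "\<dots> = (iv n q * hp n q) * Z * iv n p"
    unfolding shift_hp[OF assms(1)] q_def by (simp add: mult.assoc)
  also have "\<dots> = Z * iv n p" using inv_r[OF q0] uZ by (simp add: hp_def)
  finally show ?thesis unfolding q_def by simp
qed

lemma iv_hp1: "p \<noteq> 0 \<Longrightarrow> iv n p * hp n p = uu n"
  unfolding hp_def by (rule inv_r)
lemma iv_hp2: "p \<noteq> 0 \<Longrightarrow> hp n p * iv n p = uu n"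
  unfolding hp_def by (rule inv_l)

lemma iv_mult:
  assumes "p \<noteq> 0" "q \<noteq> 0"
  shows "iv n (p * q) = iv n p * iv n q"
proof -
  have pq: "p * q \<noteq> 0" using assms by simp
  have "iv n p * iv n q = iv n p * iv n q * (hp n (q * p) * iv n (p * q))"
    using iv_hp2[OF pq] by (simp add: mult.commute uu_cl2 mult.assoc)
  also have "\<dots> = iv n p * (iv n q * hp n q) * hp n p * iv n (p * q)"
    by (simp add: hp_mult mult.assoc)
  also have "\<dots> = (iv n p * hp n p) * iv n (p * q)"
    using iv_hp1[OF assms(2)] by (simp add: uu_cl2 mult.assoc)
  also have "\<dots> = iv n (p * q)"
    using iv_hp1[OF assms(1)] by (simp add: uu_cl1)
  finally show ?thesis by simp
qed

lemma iv_one: "iv n 1 = uu n"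
proof -
  have "hp n 1 * iv n 1 = uu n" by (rule iv_hp2) simp
  moreover have "hp n 1 = uu n" using hp_const[of 1] by (simp add: one_pCons)
  ultimately show ?thesis by (simp add: uu_cl1)
qed

lemma iv_hp_comm: "iv n p * hp n q = hp n q * iv n p"
  by (rule comm_iv[symmetric]) (auto simp: hp_comm hp_loc)

end

lemma fpoly_0: "fpoly 0 = 1" by (simp add: fpoly_def)

lemma fpoly_Suc: "fpoly (Suc k) = fpoly k * [:of_nat (k + 2), 1:]"
proof -
  have "{2..Suc k + 1} = insert (k + 2) {2..k + 1}" by auto
  then show ?thesis unfolding fpoly_def by (simp add: mult.commute)
qed

lemma fpoly_nz: "fpoly k \<noteq> 0"
  by (induction k) (simp_all add: fpoly_0 fpoly_Suc del: mult_pCons_left mult_pCons_right)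

lemma pcomp_lin: "pcompose [:a, 1:] [:c, 1:] = [:a + c, (1::complex):]"
  by (simp add: pcompose_pCons)

lemma fpoly_shift: "fpoly (Suc k) = [:2, 1:] * pcompose (fpoly k) [:1, 1:]"
proof (induction k)
  case 0
  then show ?case by (simp add: fpoly_Suc fpoly_0 pcompose_1 del: mult_pCons_left mult_pCons_right)
next
  case (Suc k)
  have "fpoly (Suc (Suc k)) = fpoly (Suc k) * [:of_nat (Suc k + 2), 1:]" by (rule fpoly_Suc)
  also have "\<dots> = [:2, 1:] * pcompose (fpoly k) [:1, 1:] * [:of_nat (Suc k + 2), 1:]"
    by (simp only: Suc.IH)
  also have "[:of_nat (Suc k + 2), 1:] = pcompose [:of_nat (k + 2), 1:] [:1, 1::complex:]"
    by (simp add: pcomp_lin)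
  also have "[:2, 1:] * pcompose (fpoly k) [:1, 1:] * pcompose [:of_nat (k + 2), 1:] [:1, 1:]
      = [:2, 1:] * pcompose (fpoly (Suc k)) [:1, 1:]"
    by (simp only: fpoly_Suc pcompose_mult mult.assoc)
  finally show ?case .
qed

lemma fpoly_1: "fpoly 1 = [:2, 1:]"
  by (simp add: fpoly_Suc[of 0] fpoly_0 del: mult_pCons_left mult_pCons_right)

lemma pcompose_nz: "p \<noteq> 0 \<Longrightarrow> pcompose p [:c, 1::complex:] \<noteq> 0"
  using pcompose_eq_0[of p "[:c,1:]"] by auto

context
  fixes n :: nat
begin

abbreviation V where "V k \<equiv> iv n (fpoly k)"
abbreviation W where "W k \<equiv> iv n (pcompose (fpoly k) [:1, 1:])"

lemma iv_comm: "p \<noteq> 0 \<Longrightarrow> q \<noteq> 0 \<Longrightarrow> iv n p * iv n q = iv n q * iv n p"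
  by (metis iv_mult mult.commute)

lemma V_0: "V 0 = uu n" by (simp add: fpoly_0 iv_one)

lemma V1_W: "V 1 * W k = V (Suc k)"
  unfolding fpoly_shift[of k] fpoly_1
  by (rule iv_mult[symmetric]) (simp_all add: fpoly_nz pcompose_nz)

lemma W_V: "W k + scl (of_nat k) (V (Suc k)) = V k"
proof -
  have nz1: "fpoly k \<noteq> 0" by (rule fpoly_nz)
  have nz2: "pcompose (fpoly k) [:1, 1:] \<noteq> 0" by (rule pcompose_nz[OF fpoly_nz])
  have nz3: "[:2, 1::complex:] \<noteq> 0" by simp
  have nz4: "[:of_nat (k+2), 1::complex:] \<noteq> 0" by simp
  have a: "V (Suc k) * hp n [:2, 1:] = W k"
  proof -
    have "V (Suc k) = W k * iv n [:2, 1:]"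
      unfolding fpoly_shift[of k] iv_mult[OF nz3 nz2] by (rule iv_comm[OF nz3 nz2])
    then have "V (Suc k) * hp n [:2, 1:] = W k * (iv n [:2, 1:] * hp n [:2, 1:])"
      by (simp only: mult.assoc)
    also have "\<dots> = W k" unfolding iv_hp1[OF nz3] by (rule uu_cl2)
    finally show ?thesis .
  qed
  have b: "V (Suc k) * hp n [:of_nat (k+2), 1:] = V k"
  proof -
    have "V (Suc k) = V k * iv n [:of_nat (k+2), 1:]"
      unfolding fpoly_Suc[of k] by (rule iv_mult[OF nz1 nz4])
    then have "V (Suc k) * hp n [:of_nat (k+2), 1:] = V k * (iv n [:of_nat (k+2), 1:] * hp n [:of_nat (k+2), 1:])"
      by (simp only: mult.assoc)
    also have "\<dots> = V k" unfolding iv_hp1[OF nz4] by (rule uu_cl2)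
    finally show ?thesis .
  qed
  have c: "hp n [:2, 1:] + scl (of_nat k) (uu n) = hp n [:of_nat (k+2), 1:]"
  proof -
    have e: "(2::complex) + of_nat k = of_nat (k+2)" by simp
    show ?thesis unfolding hp_lin add.assoc scl_add_left[symmetric] e ..
  qed
  have "W k + scl (of_nat k) (V (Suc k)) = V (Suc k) * (hp n [:2, 1:] + scl (of_nat k) (uu n))"
    unfolding distrib_left a mult_scl uu_cl2 ..
  also have "\<dots> = V k" unfolding c b ..
  finally show ?thesis .
qed

lemma X_V: "Xg n a * V k = W k * Xg n a"
  by (rule iv_shift[OF shift_X uu_cl2 fpoly_nz])

lemma F_dup_V: "Fa n * (dup n a * V k) = W k * (Fa n * dup n a)"
proof -
  have ld: "dup n a * uu n = dup n a"
    unfolding dup_def by (simp add: sum_distrib_right mult.assoc uu_cl2)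
  have lF: "Fa n * uu n = Fa n" unfolding cl_F[symmetric] by (rule uu_cl2)
  have "dup n a * V k = iv n (pcompose (fpoly k) [:-1, 1:]) * dup n a"
    by (rule iv_shift[OF shift_dup ld fpoly_nz])
  then have "Fa n * (dup n a * V k) = (Fa n * iv n (pcompose (fpoly k) [:-1, 1:])) * dup n a"
    by (simp add: mult.assoc)
  also have "Fa n * iv n (pcompose (fpoly k) [:-1, 1:]) = iv n (pcompose (pcompose (fpoly k) [:-1, 1:]) [:2, 1:]) * Fa n"
    by (rule iv_shift[OF shift_F lF pcompose_nz[OF fpoly_nz]])
  also have "pcompose (pcompose (fpoly k) [:-1, 1:]) [:2, 1:] = pcompose (fpoly k) [:1, 1:]"
    by (simp only: pcompose_assoc[symmetric] pcomp_lin) simp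
  finally show ?thesis by (simp only: mult.assoc)
qed

lemma E_V1: "Ea n * V 1 = iv n [:0, 1:] * Ea n"
proof -
  have lE: "Ea n * uu n = Ea n" unfolding cl_E[symmetric] by (rule uu_cl2)
  have "Ea n * V 1 = iv n (pcompose (fpoly 1) [:-2, 1:]) * Ea n"
    by (rule iv_shift[OF shift_E lE fpoly_nz])
  also have "pcompose (fpoly 1) [:-2, 1:] = [:0, 1:]"
    by (simp only: fpoly_1 pcomp_lin) simp
  finally show ?thesis .
qed

lemma ivH: "iv n [:0, 1:] * Ha n = uu n"
proof -
  have "hp n [:0, 1:] = Ha n" using hp_lin[of n 0] by simp
  then show ?thesis using iv_hp1[of "[:0, 1:]" n] by simp
qed

end

definition cc :: "nat \<Rightarrow> complex" where "cc k = (-1) ^ k / fact k"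

lemma cc_Suc0: "cc (Suc k) * of_nat (Suc k) = - cc k"
proof -
  have nz: "(of_nat (Suc k) :: complex) \<noteq> 0" by (simp only: of_nat_eq_0_iff)
  have "cc (Suc k) * of_nat (Suc k) = (-1) ^ Suc k / fact k"
    unfolding cc_def fact_Suc using nz by (simp del: of_nat_Suc)
  then show ?thesis unfolding cc_def by simp
qed

lemma cc_Suc: "cc (Suc k) * (of_nat (Suc k) * \<i>) = - (cc k * \<i>)"
  using cc_Suc0[of k] by (simp only: mult.assoc[symmetric]) simp

lemma pc': "(x::aq) ^ k * (x * w) = x * (x ^ k * w)"
  by (simp add: mult.assoc[symmetric] power_commutes)

context
  fixes n :: nat
begin

lemma X_Fpow: "Xg n a * Fa n ^ k = Fa n ^ k * Xg n a"
  using power_commuting_commutes[OF X_F[of n a, symmetric], of k] by simp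

lemma dup_Fpow: "a \<in> Sn n \<Longrightarrow>
  dup n a * Fa n ^ Suc k = Fa n ^ Suc k * dup n a + scl (of_nat (Suc k) * \<i>) (Xg n a * Fa n ^ k)"
proof (induction k)
  case 0
  then show ?case by (simp add: dup_F)
next
  case (Suc k)
  have "dup n a * Fa n ^ Suc (Suc k) = (dup n a * Fa n ^ Suc k) * Fa n"
    by (simp only: power_Suc2 mult.assoc)
  also have "\<dots> = Fa n ^ Suc k * (dup n a * Fa n) + scl (of_nat (Suc k) * \<i>) (Xg n a * (Fa n ^ k * Fa n))"
    unfolding Suc.IH[OF Suc.prems] by (simp add: distrib_right mult.assoc power_commutes)
  also have "\<dots> = Fa n ^ Suc (Suc k) * dup n a + scl \<i> (Fa n ^ Suc k * Xg n a)
       + scl (of_nat (Suc k) * \<i>) (Xg n a * Fa n ^ Suc k)"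
    unfolding dup_F[OF Suc.prems] by (simp add: distrib_left mult.assoc power_commutes pc')
  also have "\<dots> = Fa n ^ Suc (Suc k) * dup n a + scl (of_nat (Suc (Suc k)) * \<i>) (Xg n a * Fa n ^ Suc k)"
    unfolding X_Fpow[symmetric] by (simp add: add.assoc scl_add_left[symmetric] algebra_simps)
  finally show ?case .
qed

lemma F_dup_Fpow: "a \<in> Sn n \<Longrightarrow>
  Fa n * (dup n a * Fa n ^ k) = Fa n ^ Suc k * dup n a + scl (of_nat k * \<i>) (Xg n a * Fa n ^ k)"
proof (cases k)
  case 0
  then show ?thesis by simp
next
  case (Suc j)
  assume a: "a \<in> Sn n"
  have "Fa n * (dup n a * Fa n ^ k) = Fa n * Fa n ^ Suc j * dup n a
      + scl (of_nat (Suc j) * \<i>) (Fa n * Xg n a * Fa n ^ j)"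
    unfolding Suc dup_Fpow[OF a] by (simp add: distrib_left mult.assoc)
  also have "Fa n * Xg n a * Fa n ^ j = Xg n a * Fa n ^ Suc j"
    by (metis X_F mult.assoc power_Suc)
  finally show ?thesis unfolding Suc by simp
qed

definition ad where "ad z = Ea n * z - z * Ea n"

lemma ad_mult: "ad (z * w) = ad z * w + z * ad w"
  unfolding ad_def by (simp add: algebra_simps)
lemma ad_add: "ad (z + w) = ad z + ad w"
  unfolding ad_def by (simp add: algebra_simps)
lemma ad_scl: "ad (scl c z) = scl c (ad z)"
  unfolding ad_def by simp
lemma ad_zero: "ad 0 = 0" unfolding ad_def by simp
lemma ad_X: "a \<in> Sn n \<Longrightarrow> ad (Xg n a) = scl \<i> (dup n a)"
  unfolding ad_def by (simp add: E_X)
lemma ad_dup: "ad (dup n a) = 0"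
  unfolding ad_def by (simp add: E_dup)
lemma ad_uu: "ad (uu n) = 0"
  unfolding ad_def cl_E[symmetric] by (simp add: uu_cl1 uu_cl2)

lemma adpow_zero: "(ad ^^ k) 0 = 0"
  by (induction k) (simp_all add: ad_zero)

lemma adpow_X: "a \<in> Sn n \<Longrightarrow>
  (ad ^^ Suc k) (Xg n a * z) = Xg n a * (ad ^^ Suc k) z + scl (of_nat (Suc k) * \<i>) (dup n a * (ad ^^ k) z)"
proof (induction k)
  case 0
  then show ?case by (simp add: ad_mult ad_X add.commute)
next
  case (Suc k)
  have "(ad ^^ Suc (Suc k)) (Xg n a * z) = ad ((ad ^^ Suc k) (Xg n a * z))" by simp
  also have "\<dots> = Xg n a * (ad ^^ Suc (Suc k)) z + scl \<i> (dup n a * (ad ^^ Suc k) z)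
      + scl (of_nat (Suc k) * \<i>) (dup n a * (ad ^^ Suc k) z)"
    unfolding Suc.IH[OF Suc.prems] by (simp add: ad_add ad_scl ad_mult ad_X[OF Suc.prems] ad_dup add.commute)
  also have "\<dots> = Xg n a * (ad ^^ Suc (Suc k)) z + scl (of_nat (Suc (Suc k)) * \<i>) (dup n a * (ad ^^ Suc k) z)"
    by (simp add: add.assoc scl_add_left[symmetric] algebra_simps)
  finally show ?case .
qed

definition xm where "xm as = foldr (\<lambda>a z. Xg n a * z) as (uu n)"

lemma cl_xmono: "cl n (xmono as) = xm as"
  unfolding xmono_def xm_def cl_eprod by (simp add: foldr_map comp_def)

lemma adpow_uu: "0 < k \<Longrightarrow> (ad ^^ k) (uu n) = 0"
proof -
  assume "0 < k"
  then obtain j where k: "k = Suc j" by (cases k) auto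
  have "(ad ^^ Suc j) (uu n) = (ad ^^ j) (ad (uu n))" by (simp only: funpow_Suc_right o_apply)
  then show ?thesis unfolding k ad_uu adpow_zero .
qed

lemma adpow_xm: "set as \<subseteq> Sn n \<Longrightarrow> length as < k \<Longrightarrow> (ad ^^ k) (xm as) = 0"
proof (induction as arbitrary: k)
  case Nil
  have "xm [] = uu n" by (simp add: xm_def)
  then show ?case using adpow_uu[of k] Nil by simp
next
  case (Cons a as)
  then obtain j where k: "k = Suc j" and j: "length as < j" by (cases k) auto
  have a: "a \<in> Sn n" and s: "set as \<subseteq> Sn n" using Cons.prems by auto
  have "(ad ^^ k) (xm (a # as)) = Xg n a * (ad ^^ Suc j) (xm as) + scl (of_nat (Suc j) * \<i>) (dup n a * (ad ^^ j) (xm as))"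
    unfolding k xm_def using adpow_X[OF a] by (simp add: xm_def)
  also have "\<dots> = 0" using Cons.IH[OF s j] Cons.IH[OF s, of "Suc j"] j by simp
  finally show ?case .
qed

end

context
  fixes n :: nat
begin

lemma cl_adE: "cl n (adE n w) = ad n (cl n w)"
  unfolding adE_def cl_esub cl_Mul cl_E ad_def ..

lemma cl_adEpow: "cl n ((adE n ^^ k) w) = (ad n ^^ k) (cl n w)"
  by (induction k) (simp_all add: cl_adE)

definition T where "T K z = (\<Sum>k\<le>K. scl (cc k) (V n k * (Fa n ^ k * (ad n ^^ k) z)))"

lemma cl_Ptrunc: "cl n (Ptrunc n K w) = T K (cl n w)"
proof -
  have "cl n (Ptrunc n K w) = sum_list (map (\<lambda>k. scl (cc k) (V n k * (Fa n ^ k * (ad n ^^ k) (cl n w)))) [0..<Suc K])"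
    unfolding Ptrunc_def cl_esum cl_MulScal unfolding cl_Mul cl_epow cl_F cl_adEpow cc_def[symmetric]
    by (simp add: mult.assoc uu_cl2')
  also have "\<dots> = (\<Sum>k\<in>set [0..<Suc K]. scl (cc k) (V n k * (Fa n ^ k * (ad n ^^ k) (cl n w))))"
    by (rule sum_set_upt_conv_sum_list_nat[symmetric])
  also have "set [0..<Suc K] = {..K}" by auto
  finally show ?thesis unfolding T_def .
qed

lemma T_stable:
  assumes "\<And>j. L < j \<Longrightarrow> (ad n ^^ j) z = 0" "L \<le> K"
  shows "T K z = T L z"
  unfolding T_def
  by (rule sum.mono_neutral_right) (use assms in auto)

lemma T1X: "a \<in> Sn n \<Longrightarrow> T 1 (Xg n a) = Xg n a - scl \<i> (V n 1 * (Fa n * dup n a))"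
  unfolding T_def by (simp add: cc_def V_0 uu_cl1 ad_X scl_m1 scl_uminus_left[symmetric])

lemma key_term:
  assumes a: "a \<in> Sn n"
  shows "(Xg n a - scl \<i> (V n 1 * (Fa n * dup n a))) * (V n k * (Fa n ^ k * Dv))
    = V n k * (Fa n ^ k * (Xg n a * Dv)) - scl \<i> (V n (Suc k) * (Fa n ^ Suc k * (dup n a * Dv)))"
proof -
  define R where "R = Fa n ^ k * (Xg n a * Dv)"
  have 1: "Xg n a * (V n k * (Fa n ^ k * Dv)) = W n k * R"
  proof -
    have "Xg n a * (V n k * (Fa n ^ k * Dv)) = (Xg n a * V n k) * (Fa n ^ k * Dv)" by (simp only: mult.assoc)
    also have "\<dots> = W n k * ((Xg n a * Fa n ^ k) * Dv)" by (simp only: X_V mult.assoc)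
    also have "\<dots> = W n k * R" unfolding R_def X_Fpow by (simp only: mult.assoc)
    finally show ?thesis .
  qed
  have 2: "V n 1 * (Fa n * dup n a) * (V n k * (Fa n ^ k * Dv))
      = V n (Suc k) * (Fa n ^ Suc k * (dup n a * Dv)) + scl (of_nat k * \<i>) (V n (Suc k) * R)"
  proof -
    have "V n 1 * (Fa n * dup n a) * (V n k * (Fa n ^ k * Dv))
        = V n 1 * (Fa n * (dup n a * V n k)) * (Fa n ^ k * Dv)"
      by (simp add: mult.assoc)
    also have "\<dots> = (V n 1 * W n k) * (Fa n * (dup n a * Fa n ^ k)) * Dv"
      unfolding F_dup_V by (simp add: mult.assoc)
    also have "\<dots> = V n (Suc k) * (Fa n ^ Suc k * dup n a + scl (of_nat k * \<i>) (Xg n a * Fa n ^ k)) * Dv"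
      unfolding V1_W F_dup_Fpow[OF a] ..
    also have "\<dots> = V n (Suc k) * (Fa n ^ Suc k * (dup n a * Dv)) + scl (of_nat k * \<i>) (V n (Suc k) * R)"
      unfolding R_def by (simp add: distrib_left distrib_right mult.assoc X_Fpow flip: mult.assoc)
    finally show ?thesis .
  qed
  have "(Xg n a - scl \<i> (V n 1 * (Fa n * dup n a))) * (V n k * (Fa n ^ k * Dv))
      = W n k * R - scl \<i> (V n (Suc k) * (Fa n ^ Suc k * (dup n a * Dv)) + scl (of_nat k * \<i>) (V n (Suc k) * R))"
    unfolding left_diff_distrib 1 scl_mult_left 2 ..
  also have "\<dots> = (W n k + scl (of_nat k) (V n (Suc k))) * R - scl \<i> (V n (Suc k) * (Fa n ^ Suc k * (dup n a * Dv)))"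
  proof -
    have "\<i> * (of_nat k * \<i>) = - (of_nat k :: complex)" by (simp add: algebra_simps)
    then show ?thesis by (simp add: distrib_right algebra_simps scl_uminus_left)
  qed
  also have "\<dots> = V n k * (Fa n ^ k * (Xg n a * Dv)) - scl \<i> (V n (Suc k) * (Fa n ^ Suc k * (dup n a * Dv)))"
    unfolding W_V R_def ..
  finally show ?thesis .
qed

end

context
  fixes n :: nat
begin

lemma main_id:
  assumes a: "a \<in> Sn n" and z: "\<And>j. K < j \<Longrightarrow> (ad n ^^ j) z = 0"
  shows "T n 1 (Xg n a) * T n K z = T n (Suc K) (Xg n a * z)"
proof -
  define A where "A k = scl (cc k) (V n k * (Fa n ^ k * (Xg n a * (ad n ^^ k) z)))" for k
  define B where "B k = scl (cc k * \<i>) (V n (Suc k) * (Fa n ^ Suc k * (dup n a * (ad n ^^ k) z)))" for k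
  have L: "T n 1 (Xg n a) * T n K z = (\<Sum>k\<le>K. A k - B k)"
    unfolding T1X[OF a] T_def[of n K] sum_distrib_left mult_scl key_term[OF a] A_def B_def
    by (simp add: scl_diff)
  have f0: "scl (cc 0) (V n 0 * (Fa n ^ 0 * (ad n ^^ 0) (Xg n a * z))) = A 0"
    unfolding A_def by simp
  have fS: "scl (cc (Suc k)) (V n (Suc k) * (Fa n ^ Suc k * (ad n ^^ Suc k) (Xg n a * z))) = A (Suc k) - B k" for k
  proof -
    have "scl (cc (Suc k)) (V n (Suc k) * (Fa n ^ Suc k * (ad n ^^ Suc k) (Xg n a * z)))
      = A (Suc k) + scl (cc (Suc k) * (of_nat (Suc k) * \<i>)) (V n (Suc k) * (Fa n ^ Suc k * (dup n a * (ad n ^^ k) z)))"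
      unfolding adpow_X[OF a] A_def by (simp add: distrib_left)
    also have "\<dots> = A (Suc k) - B k"
      unfolding cc_Suc B_def scl_uminus_left by simp
    finally show ?thesis .
  qed
  have "T n (Suc K) (Xg n a * z) = A 0 + (\<Sum>k\<le>K. A (Suc k) - B k)"
    unfolding T_def sum.atMost_Suc_shift f0 fS ..
  also have "\<dots> = (\<Sum>k\<le>Suc K. A k) - (\<Sum>k\<le>K. B k)"
    unfolding sum_subtractf sum.atMost_Suc_shift[of A] by simp
  also have "\<dots> = (\<Sum>k\<le>K. A k) - (\<Sum>k\<le>K. B k)"
    using z[of "Suc K"] by (simp add: A_def)
  finally show ?thesis unfolding L sum_subtractf by simp
qed

lemma T0_uu: "T n 0 (uu n) = uu n"
  unfolding T_def by (simp add: cc_def V_0 uu_idem)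

lemma prod_T: "set as \<subseteq> Sn n \<Longrightarrow> foldr (*) (map (\<lambda>a. T n 1 (Xg n a)) as) (uu n) = T n (length as) (xm n as)"
proof (induction as)
  case Nil
  then show ?case by (simp add: xm_def T0_uu)
next
  case (Cons a as)
  then have a: "a \<in> Sn n" and s: "set as \<subseteq> Sn n" by auto
  have "foldr (*) (map (\<lambda>a. T n 1 (Xg n a)) (a # as)) (uu n) = T n 1 (Xg n a) * T n (length as) (xm n as)"
    using Cons.IH[OF s] by simp
  also have "\<dots> = T n (Suc (length as)) (Xg n a * xm n as)"
    by (rule main_id[OF a adpow_xm[OF s]])
  finally show ?case by (simp add: xm_def)
qed

definition inIa where "inIa z \<longleftrightarrow> (\<exists>y. z = y * Ea n)"

lemma Ea_loc: "uu n * Ea n = Ea n" "Ea n * uu n = Ea n"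
  unfolding cl_E[symmetric] by (rule uu_cl1, rule uu_cl2)

lemma inI_iff: "inI n m \<longleftrightarrow> inIa (cl n m)"
proof
  assume "inI n m"
  then obtain y where "weq n m (Mul y (Eexpr n))" unfolding inI_def by blast
  then have "cl n m = cl n y * Ea n" unfolding cl_eq_iff[symmetric] cl_Mul cl_E .
  then show "inIa (cl n m)" unfolding inIa_def by blast
next
  assume "inIa (cl n m)"
  then obtain y where y: "cl n m = y * Ea n" unfolding inIa_def by blast
  obtain e where e: "y * uu n = cl n e" using aq_loc by blast
  have "cl n m = cl n (Mul e (Eexpr n))"
    unfolding cl_Mul cl_E e[symmetric] y by (simp add: mult.assoc Ea_loc)
  then show "inI n m" unfolding inI_def cl_eq_iff by blast
qed

lemma inIa_add: "inIa a \<Longrightarrow> inIa b \<Longrightarrow> inIa (a + b)"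
  unfolding inIa_def
proof (elim exE)
  fix y1 y2 assume "a = y1 * Ea n" "b = y2 * Ea n"
  then have "a + b = (y1 + y2) * Ea n" by (simp only: distrib_right)
  then show "\<exists>y. a + b = y * Ea n" ..
qed
lemma inIa_uminus: "inIa a \<Longrightarrow> inIa (- a)"
  unfolding inIa_def
proof (elim exE)
  fix y assume "a = y * Ea n"
  then have "- a = (- y) * Ea n" by (simp only: minus_mult_left)
  then show "\<exists>y. - a = y * Ea n" ..
qed
lemma inIa_diff: "inIa a \<Longrightarrow> inIa b \<Longrightarrow> inIa (a - b)"
  unfolding diff_conv_add_uminus by (intro inIa_add inIa_uminus)
lemma inIa_lmult: "inIa a \<Longrightarrow> inIa (w * a)"
  unfolding inIa_def
proof (elim exE)
  fix y assume "a = y * Ea n"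
  then have "w * a = (w * y) * Ea n" by (simp only: mult.assoc)
  then show "\<exists>y. w * a = y * Ea n" ..
qed
lemma inIa_0: "inIa 0"
  unfolding inIa_def
proof
  show "0 = 0 * Ea n" by (simp only: mult_zero_left)
qed

definition Nrm where "Nrm P \<longleftrightarrow> inIa (Ea n * P)"

lemma inIa_rmult: "inIa a \<Longrightarrow> Nrm P \<Longrightarrow> inIa (a * P)"
  unfolding Nrm_def inIa_def
proof (elim exE)
  fix y z assume "a = y * Ea n" "Ea n * P = z * Ea n"
  then have "a * P = (y * z) * Ea n" by (simp only: mult.assoc)
  then show "\<exists>y. a * P = y * Ea n" ..
qed
lemma Nrm_mult: "Nrm P \<Longrightarrow> Nrm Q \<Longrightarrow> Nrm (P * Q)"
proof -
  assume P: "Nrm P" and Q: "Nrm Q"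
  have "inIa ((Ea n * P) * Q)" using P Q inIa_rmult unfolding Nrm_def by blast
  then show ?thesis unfolding Nrm_def by (simp only: mult.assoc)
qed
lemma Nrm_uu: "Nrm (uu n)"
  unfolding Nrm_def inIa_def Ea_loc
proof
  show "Ea n = 1 * Ea n" by (simp only: mult_1_left)
qed

lemma Nrm_T1X:
  assumes a: "a \<in> Sn n"
  shows "Nrm (T n 1 (Xg n a))"
proof -
  have "Ea n * (V n 1 * (Fa n * dup n a)) = iv n [:0, 1:] * (Ea n * Fa n) * dup n a"
    by (simp only: mult.assoc[symmetric] E_V1)
  also have "\<dots> = (iv n [:0, 1:] * Fa n * dup n a) * Ea n + dup n a"
  proof -
    have "uu n * dup n a = dup n a" unfolding dup_def by (simp add: sum_distrib_left uu_cl1')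
    have "iv n [:0, 1:] * (Ea n * Fa n) * dup n a
        = iv n [:0, 1:] * Fa n * (Ea n * dup n a) + (iv n [:0, 1:] * Ha n) * dup n a"
      unfolding E_F by (simp only: distrib_left distrib_right mult.assoc)
    also have "\<dots> = (iv n [:0, 1:] * Fa n * dup n a) * Ea n + dup n a"
      unfolding E_dup ivH \<open>uu n * dup n a = dup n a\<close> by (simp only: mult.assoc)
    finally show ?thesis .
  qed
  finally have e1: "Ea n * (V n 1 * (Fa n * dup n a)) = (iv n [:0, 1:] * Fa n * dup n a) * Ea n + dup n a" .
  have "Ea n * T n 1 (Xg n a) = (Xg n a - scl \<i> (iv n [:0, 1:] * Fa n * dup n a)) * Ea n"
    unfolding T1X[OF a] right_diff_distrib mult_scl e1 E_X[OF a]
    by (simp add: left_diff_distrib)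
  then show ?thesis unfolding Nrm_def inIa_def by blast
qed

lemma Nrm_foldr: "(\<forall>p\<in>set Ps. Nrm p) \<Longrightarrow> Nrm (foldr (*) Ps (uu n))"
  by (induction Ps) (auto simp: Nrm_uu Nrm_mult)

lemma prod_cong_I:
  "length Rs = length Ps \<Longrightarrow> (\<forall>i<length Ps. inIa (Rs ! i - Ps ! i)) \<Longrightarrow> (\<forall>p\<in>set Ps. Nrm p)
    \<Longrightarrow> inIa (foldr (*) Rs (uu n) - foldr (*) Ps (uu n))"
proof (induction Rs Ps rule: list_induct2)
  case Nil
  then show ?case by (simp add: inIa_0)
next
  case (Cons r Rs p Ps)
  have h0: "inIa (r - p)" using Cons.prems(1) by (metis length_Cons nth_Cons_0 zero_less_Suc)
  have h1: "\<forall>i<length Ps. inIa (Rs ! i - Ps ! i)" using Cons.prems(1) by auto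
  have IH: "inIa (foldr (*) Rs (uu n) - foldr (*) Ps (uu n))"
    using Cons.IH[OF h1] Cons.prems(2) by simp
  have N: "Nrm (foldr (*) Ps (uu n))" using Cons.prems(2) Nrm_foldr by simp
  have "foldr (*) (r # Rs) (uu n) - foldr (*) (p # Ps) (uu n)
      = r * (foldr (*) Rs (uu n) - foldr (*) Ps (uu n)) + (r - p) * foldr (*) Ps (uu n)"
    by (simp add: algebra_simps)
  then show ?case using inIa_add inIa_lmult[OF IH] inIa_rmult[OF h0 N] by simp
qed

end

context
  fixes n :: nat
begin

lemma P_of_iff: "P_of n w c \<longleftrightarrow> (\<exists>K0. \<forall>K\<ge>K0. inIa n (T n K (cl n w) - cl n c))"
  unfolding P_of_def inI_iff cl_esub cl_Ptrunc ..

lemma adpow_Xv: "a \<in> Sn n \<Longrightarrow> 1 < j \<Longrightarrow> (ad n ^^ j) (Xg n a) = 0"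
proof -
  assume a: "a \<in> Sn n" and j: "1 < j"
  then obtain i where i: "j = Suc (Suc i)" by (cases j; cases "j - 1") auto
  have "(ad n ^^ Suc (Suc i)) (Xg n a) = (ad n ^^ i) (ad n (ad n (Xg n a)))"
    by (simp only: funpow_Suc_right o_apply)
  also have "\<dots> = 0" unfolding ad_X[OF a] ad_scl ad_dup scl_zero adpow_zero ..
  finally show ?thesis unfolding i .
qed

lemma P_of_X: "a \<in> Sn n \<Longrightarrow> P_of n (Gen (X a)) (Ptrunc n 1 (Gen (X a)))"
  unfolding P_of_iff cl_Ptrunc
proof (intro exI allI impI)
  fix K :: nat assume a: "a \<in> Sn n" and K: "1 \<le> K"
  have "T n K (Xg n a) = T n 1 (Xg n a)" by (rule T_stable[OF adpow_Xv[OF a] K])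
  then show "inIa n (T n K (Xg n a) - T n 1 (Xg n a))" by (simp add: inIa_0)
qed

lemma P_of_X_val: "a \<in> Sn n \<Longrightarrow> P_of n (Gen (X a)) r \<Longrightarrow> inIa n (T n 1 (Xg n a) - cl n r)"
proof -
  assume a: "a \<in> Sn n" and "P_of n (Gen (X a)) r"
  then obtain K0 where K0: "\<forall>K\<ge>K0. inIa n (T n K (Xg n a) - cl n r)" unfolding P_of_iff by blast
  have "T n (max K0 1) (Xg n a) = T n 1 (Xg n a)" using adpow_Xv[OF a] by (intro T_stable) auto
  then show ?thesis using K0[rule_format, of "max K0 1"] by simp
qed

lemma P_of_xm: "set as \<subseteq> Sn n \<Longrightarrow> P_of n (xmono as) (Ptrunc n (length as) (xmono as))"
  unfolding P_of_iff cl_Ptrunc cl_xmono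
proof (intro exI allI impI)
  fix K :: nat assume s: "set as \<subseteq> Sn n" and K: "length as \<le> K"
  have "T n K (xm n as) = T n (length as) (xm n as)" by (rule T_stable[OF adpow_xm[OF s] K])
  then show "inIa n (T n K (xm n as) - T n (length as) (xm n as))" by (simp add: inIa_0)
qed

lemma P_of_xm_val: "set as \<subseteq> Sn n \<Longrightarrow> P_of n (xmono as) c \<Longrightarrow> inIa n (T n (length as) (xm n as) - cl n c)"
proof -
  assume s: "set as \<subseteq> Sn n" and "P_of n (xmono as) c"
  then obtain K0 where K0: "\<forall>K\<ge>K0. inIa n (T n K (xm n as) - cl n c)" unfolding P_of_iff cl_xmono by blast
  have "T n (max K0 (length as)) (xm n as) = T n (length as) (xm n as)" using adpow_xm[OF s] by (intro T_stable) auto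
  then show ?thesis using K0[rule_format, of "max K0 (length as)"] by simp
qed

end

theorem mainTheorem6:
  fixes n :: nat and as :: "nat list"
  assumes "length as \<ge> 1" and "set as \<subseteq> {1..n}"
  shows "(\<forall>a\<in>set as. \<exists>r. P_of n (Gen (X a)) r)
       \<and> (\<exists>c. P_of n (xmono as) c)
       \<and> (\<forall>rs c. length rs = length as
            \<longrightarrow> (\<forall>i<length as. P_of n (Gen (X (as ! i))) (rs ! i))
            \<longrightarrow> P_of n (xmono as) c
            \<longrightarrow> inI n (esub (eprod rs) c))"
proof (intro conjI allI impI)
  have s: "set as \<subseteq> Sn n" using assms(2) unfolding Sn_def .
  show "\<forall>a\<in>set as. \<exists>r. P_of n (Gen (X a)) r"
    using s P_of_X by blast
  show "\<exists>c. P_of n (xmono as) c"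
    using P_of_xm[OF s] by blast
  fix rs c
  assume len: "length rs = length as"
    and hr: "\<forall>i<length as. P_of n (Gen (X (as ! i))) (rs ! i)"
    and hc: "P_of n (xmono as) c"
  define Ps where "Ps = map (\<lambda>a. T n 1 (Xg n a)) as"
  define Rs where "Rs = map (cl n) rs"
  have l2: "length Rs = length Ps" unfolding Rs_def Ps_def using len by simp
  have d: "\<forall>i<length Ps. inIa n (Rs ! i - Ps ! i)"
  proof (intro allI impI)
    fix i assume i: "i < length Ps"
    then have ia: "i < length as" unfolding Ps_def by simp
    have ai: "as ! i \<in> Sn n" using s ia by auto
    have "inIa n (T n 1 (Xg n (as ! i)) - cl n (rs ! i))"
      by (rule P_of_X_val[OF ai hr[rule_format, OF ia]])
    then have "inIa n (- (T n 1 (Xg n (as ! i)) - cl n (rs ! i)))" by (rule inIa_uminus)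
    then show "inIa n (Rs ! i - Ps ! i)" unfolding Rs_def Ps_def using ia len by simp
  qed
  have N: "\<forall>p\<in>set Ps. Nrm n p" unfolding Ps_def using s Nrm_T1X by auto
  have h1: "inIa n (foldr (*) Rs (uu n) - foldr (*) Ps (uu n))"
    by (rule prod_cong_I[OF l2 d N])
  have e1: "foldr (*) Rs (uu n) = cl n (eprod rs)"
    unfolding Rs_def cl_eprod by (simp add: foldr_map comp_def)
  have e2: "foldr (*) Ps (uu n) = T n (length as) (xm n as)"
    unfolding Ps_def by (rule prod_T[OF s])
  have h2: "inIa n (T n (length as) (xm n as) - cl n c)" by (rule P_of_xm_val[OF s hc])
  have "inIa n ((cl n (eprod rs) - T n (length as) (xm n as)) + (T n (length as) (xm n as) - cl n c))"
    using inIa_add[OF h1[unfolded e1 e2] h2] .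
  then have "inIa n (cl n (esub (eprod rs) c))" unfolding cl_esub by simp
  then show "inI n (esub (eprod rs) c)" unfolding inI_iff .
qed


end
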